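(* Let $\mathcal M\subseteq\mathcal M^+$, $\alpha,\gamma>0$ and $\bar M\in\mathcal M^+$. For all $\varepsilon>0$, $$\mathrm{dec}^{\mathrm o}_{\mathrm r,\gamma}(\mathcal M_\alpha(\bar M)\cup\{\bar M\},\bar M)\le\mathrm{dec}^{\mathrm c}_{\mathrm r,\varepsilon}(\mathcal M\cup\{\bar M\},\bar M)+\max\Big\{0,\ \alpha+\frac1{2\gamma}-\frac{\gamma\varepsilon^2}{2}\Big\},$$ and in particular $$\mathrm{dec}^{\mathrm o}_{\mathrm r,\gamma}(\mathcal M_\alpha(\bar M)\cup\{\bar M\},\bar M)\le\mathrm{dec}^{\mathrm c}_{\mathrm r,\sqrt{2\alpha/\gamma}}(\mathcal M\cup\{\bar M\},\bar M)+\frac1{2\gamma}.$$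
   Context: Models are kernels $M:\Pi\to\Delta([0,1]\times\mathcal O)$ (rewards in $[0,1]$); $\mathcal M^+$ is the set of all models. $f^M(\pi)=\mathbb E_{(r,o)\sim M(\pi)}[r]$, $\pi_M\in\arg\max f^M$, $g^M(\pi)=f^M(\pi_M)-f^M(\pi)$; $D^2_H$ is squared Hellinger distance. For a class $\mathcal M'$: constrained regret DEC $\mathrm{dec}^{\mathrm c}_{\mathrm r,\varepsilon}(\mathcal M',\bar M)=\inf_{p\in\Delta(\Pi)}\sup_{M\in\mathcal M'}\{\mathbb E_{\pi\sim p}[g^M(\pi)]:\mathbb E_{\pi\sim p}[D^2_H(M(\pi),\bar M(\pi))]\le\varepsilon^2\}$ (value $0$ if empty); offset regret DEC $\mathrm{dec}^{\mathrm o}_{\mathrm r,\gamma}(\mathcal M',\bar M)=\inf_{p}\sup_{M\in\mathcal M'}\mathbb E_{\pi\sim p}[g^M(\pi)-\gamma D^2_H(M(\pi),\bar M(\pi))]$. Localized subclass: $\mathcal M_\alpha(\bar M)=\{M\in\mathcal M:f^M(\pi_M)\le f^{\bar M}(\pi_{\bar M})+\alpha\}$. *)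

theory Defs
  imports "HOL-Probability.Probability"
begin

definition RO :: "'o measure \<Rightarrow> (real \<times> 'o) measure" where
  "RO Obs = restrict_space borel {0..1::real} \<Otimes>\<^sub>M Obs"

definition models :: "'o measure \<Rightarrow> ('p \<Rightarrow> (real \<times> 'o) measure) set" where
  "models Obs = {M. \<forall>\<pi>. prob_space (M \<pi>) \<and> sets (M \<pi>) = sets (RO Obs)}"

text \<open>Sum measure P + Q (a dominating measure for both).\<close>
definition sum_meas :: "'a measure \<Rightarrow> 'a measure \<Rightarrow> 'a measure" where
  "sum_meas P Q = measure_of (space P) (sets P) (\<lambda>A. emeasure P A + emeasure Q A)"

definition hellinger_sq :: "'a measure \<Rightarrow> 'a measure \<Rightarrow> real" where
  "hellinger_sq P Q =
     (let \<nu> = sum_meas P Q in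
      enn2real (\<integral>\<^sup>+ x. ennreal ((sqrt (enn2real (RN_deriv \<nu> P x))
                                   - sqrt (enn2real (RN_deriv \<nu> Q x)))\<^sup>2) \<partial>\<nu>))"

definition fval :: "('p \<Rightarrow> (real \<times> 'o) measure) \<Rightarrow> 'p \<Rightarrow> real" where
  "fval M \<pi> = (\<integral>x. fst x \<partial>(M \<pi>))"

definition fstar :: "('p \<Rightarrow> (real \<times> 'o) measure) \<Rightarrow> real" where
  "fstar M = (SUP \<pi>. fval M \<pi>)"

definition gap :: "('p \<Rightarrow> (real \<times> 'o) measure) \<Rightarrow> 'p \<Rightarrow> real" where
  "gap M \<pi> = fstar M - fval M \<pi>"

definition Ep :: "'p pmf \<Rightarrow> ('p \<Rightarrow> real) \<Rightarrow> real" where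
  "Ep p h = measure_pmf.expectation p h"

definition dec_c :: "('p \<Rightarrow> (real \<times> 'o) measure) set \<Rightarrow> ('p \<Rightarrow> (real \<times> 'o) measure)
                     \<Rightarrow> real \<Rightarrow> real" where
  "dec_c Mc Mbar \<epsilon> =
     (INF p. (let S = {Ep p (gap M) | M. M \<in> Mc \<and>
                        Ep p (\<lambda>\<pi>. hellinger_sq (M \<pi>) (Mbar \<pi>)) \<le> \<epsilon>\<^sup>2}
              in if S = {} then 0 else Sup S))"

definition dec_o :: "('p \<Rightarrow> (real \<times> 'o) measure) set \<Rightarrow> ('p \<Rightarrow> (real \<times> 'o) measure)
                     \<Rightarrow> real \<Rightarrow> real" where
  "dec_o Mc Mbar \<gamma> =
     (INF p. SUP M\<in>Mc. Ep p (\<lambda>\<pi>. gap M \<pi> - \<gamma> * hellinger_sq (M \<pi>) (Mbar \<pi>)))"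

definition localized :: "('p \<Rightarrow> (real \<times> 'o) measure) set \<Rightarrow> ('p \<Rightarrow> (real \<times> 'o) measure)
                         \<Rightarrow> real \<Rightarrow> ('p \<Rightarrow> (real \<times> 'o) measure) set" where
  "localized Mc Mbar \<alpha> = {M \<in> Mc. fstar M \<le> fstar Mbar + \<alpha>}"

end

theory Submission
  imports Defs
begin
lemma pw: fixes p q r g :: real assumes "p\<ge>0" "q\<ge>0" "0\<le>r" "r\<le>1" "g>0"
  shows "(r - 1/2) * (q - p) \<le> g/2 * (sqrt p - sqrt q)^2 + (p+q)/(4*g)"
proof -
  define a where "a = sqrt p" define b where "b = sqrt q" define s where "s = r - 1/2"
  have pa: "p = a^2" "q = b^2" "a \<ge> 0" "b\<ge>0" using assms by (auto simp: a_def b_def)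
  have "\<bar>s\<bar> \<le> 1/2" using assms unfolding s_def by (auto simp: abs_if)
  then have "\<bar>s\<bar>^2 \<le> (1/2)^2" by (intro power_mono) auto
  then have s2: "s^2 \<le> 1/4" by (simp add: power2_eq_square)
  have ab: "(a+b)^2 \<le> 2*(a^2+b^2)" using sum_squares_ge_zero[of "a-b" 0] 
    by (simp add: power2_eq_square algebra_simps) 
  have "0 \<le> (g*(b-a) - s*(a+b))^2 / g" using assms by simp
  also have "\<dots> = g*(b-a)^2 - 2*((b-a)*(s*(a+b))) + (s*(a+b))^2/g"
    using assms by (simp add: power2_eq_square field_simps)
  finally have 1: "2*((b-a)*(s*(a+b))) \<le> g*(b-a)^2 + (s*(a+b))^2/g" by simp
  have "(s*(a+b))^2 = s^2 * (a+b)^2" by (simp add: power_mult_distrib)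
  also have "\<dots> \<le> (1/4) * (2*(a^2+b^2))" by (intro mult_mono s2 ab) auto
  finally have "(s*(a+b))^2 \<le> (1/2)*(a^2+b^2)" by simp
  then have 2: "(s*(a+b))^2/g \<le> (1/2)*(a^2+b^2)/g" using assms by (intro divide_right_mono) auto
  have "(r - 1/2) * (q - p) = (b-a)*(s*(a+b))" unfolding s_def pa by (simp add: power2_eq_square field_simps)
  also have "\<dots> \<le> g/2*(b-a)^2 + (1/4)*(a^2+b^2)/g" using 1 2 by simp
  also have "\<dots> = g/2 * (sqrt p - sqrt q)^2 + (p+q)/(4*g)" unfolding pa a_def[symmetric] b_def[symmetric]
    using pa(3,4) by (simp add: power2_commute)
  finally show ?thesis .
qed
lemma sum_meas:
  assumes "sets Q = sets P"
  shows "sets (sum_meas P Q) = sets P" "space (sum_meas P Q) = space P"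
   "A \<in> sets P \<Longrightarrow> emeasure (sum_meas P Q) A = emeasure P A + emeasure Q A"
proof -
  show s: "sets (sum_meas P Q) = sets P" unfolding sum_meas_def by (rule sets.sets_measure_of_eq)
  then show "space (sum_meas P Q) = space P" by (rule sets_eq_imp_space_eq)
  assume A: "A \<in> sets P"
  show "emeasure (sum_meas P Q) A = emeasure P A + emeasure Q A"
    unfolding sum_meas_def
  proof (rule emeasure_measure_of_sigma)
    show "sigma_algebra (space P) (sets P)" by (rule sets.sigma_algebra_axioms)
    show "positive (sets P) (\<lambda>A. emeasure P A + emeasure Q A)" by (simp add: positive_def)
    show "countably_additive (sets P) (\<lambda>A. emeasure P A + emeasure Q A)"
      unfolding countably_additive_def
    proof (intro allI impI)
      fix F :: "nat \<Rightarrow> _" assume F: "range F \<subseteq> sets P" "disjoint_family F"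
      have FQ: "range F \<subseteq> sets Q" using F assms by simp
      have "(\<Sum>i. emeasure P (F i) + emeasure Q (F i)) = (\<Sum>i. emeasure P (F i)) + (\<Sum>i. emeasure Q (F i))"
        by (rule suminf_add[symmetric]) auto
      also have "\<dots> = emeasure P (\<Union>(range F)) + emeasure Q (\<Union>(range F))"
        using suminf_emeasure[OF F(1) F(2)] suminf_emeasure[OF FQ F(2)] by simp
      finally show "(\<Sum>i. emeasure P (F i) + emeasure Q (F i)) = emeasure P (\<Union>(range F)) + emeasure Q (\<Union>(range F))" .
    qed
  qed fact
qed

lemma hell_bound:
  fixes r :: "'a \<Rightarrow> real"
  assumes P: "prob_space P" and Q: "prob_space Q" and sQ: "sets Q = sets P"
    and rm: "r \<in> borel_measurable P" and rb: "\<And>x. x \<in> space P \<Longrightarrow> 0 \<le> r x \<and> r x \<le> 1"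
    and g: "g > 0"
  shows "(\<integral>x. r x \<partial>Q) - (\<integral>x. r x \<partial>P) \<le> g/2 * hellinger_sq P Q + 1/(2*g)"
proof -
  define \<nu> where "\<nu> = sum_meas P Q"
  have s\<nu>: "sets \<nu> = sets P" and sp\<nu>: "space \<nu> = space P"
    and e\<nu>: "\<And>A. A \<in> sets P \<Longrightarrow> emeasure \<nu> A = emeasure P A + emeasure Q A"
    using sum_meas[OF sQ] unfolding \<nu>_def by auto
  have spQ: "space Q = space P" using sQ by (rule sets_eq_imp_space_eq)
  interpret P: prob_space P by fact
  interpret Q: prob_space Q by fact
  have "emeasure \<nu> (space \<nu>) = 2"
    using e\<nu>[of "space P"] sp\<nu> spQ P.emeasure_space_1 Q.emeasure_space_1 by simp
  then interpret N: finite_measure \<nu> by (intro finite_measureI) simp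
  have acP: "absolutely_continuous \<nu> P"
    unfolding absolutely_continuous_def
  proof
    fix A assume "A \<in> null_sets \<nu>"
    then show "A \<in> null_sets P" using e\<nu>[of A] s\<nu> by (auto simp: null_sets_def)
  qed
  have acQ: "absolutely_continuous \<nu> Q"
    unfolding absolutely_continuous_def
  proof
    fix A assume "A \<in> null_sets \<nu>"
    then show "A \<in> null_sets Q" using e\<nu>[of A] s\<nu> sQ by (auto simp: null_sets_def)
  qed
  have sfP: "sigma_finite_measure P" and sfQ: "sigma_finite_measure Q"
    by unfold_locales
  have sP': "sets P = sets \<nu>" and sQ': "sets Q = sets \<nu>" using s\<nu> sQ by auto
  define p where "p x = enn2real (RN_deriv \<nu> P x)" for x
  define q where "q x = enn2real (RN_deriv \<nu> Q x)" for x
  have pm[measurable]: "p \<in> borel_measurable \<nu>" unfolding p_def by measurable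
  have qm[measurable]: "q \<in> borel_measurable \<nu>" unfolding q_def by measurable
  have p0: "p x \<ge> 0" "q x \<ge> 0" for x unfolding p_def q_def by auto
  have rm\<nu>[measurable]: "r \<in> borel_measurable \<nu>" by (metis rm measurable_cong_sets[OF s\<nu> refl])
  have rP: "integrable P r" 
    by (rule P.integrable_const_bound[of _ 1]) (use rb rm in auto)
  have rQ: "integrable Q r" 
    by (rule Q.integrable_const_bound[of _ 1]) (use rb rm sQ spQ measurable_cong_sets[OF sQ refl] in auto)
  have ipP: "integrable \<nu> (\<lambda>x. p x * r x)" "(\<integral>x. r x \<partial>P) = (\<integral>x. p x * r x \<partial>\<nu>)"
    using N.RN_deriv_integrable[OF sfP acP sP' rm\<nu>] N.RN_deriv_integral[OF sfP acP sP' rm\<nu>] rP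
    unfolding p_def by auto
  have ipQ: "integrable \<nu> (\<lambda>x. q x * r x)" "(\<integral>x. r x \<partial>Q) = (\<integral>x. q x * r x \<partial>\<nu>)"
    using N.RN_deriv_integrable[OF sfQ acQ sQ' rm\<nu>] N.RN_deriv_integral[OF sfQ acQ sQ' rm\<nu>] rQ
    unfolding q_def by auto
  have c1: "(\<lambda>_. 1::real) \<in> borel_measurable \<nu>" by simp
  have ip1: "integrable \<nu> p" "(\<integral>x. p x \<partial>\<nu>) = 1"
    using N.RN_deriv_integrable[OF sfP acP sP' c1] N.RN_deriv_integral[OF sfP acP sP' c1]
    unfolding p_def by (auto simp: P.prob_space)
  have iq1: "integrable \<nu> q" "(\<integral>x. q x \<partial>\<nu>) = 1"
    using N.RN_deriv_integrable[OF sfQ acQ sQ' c1] N.RN_deriv_integral[OF sfQ acQ sQ' c1]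
    unfolding q_def by (auto simp: Q.prob_space)
  define h where "h x = (sqrt (p x) - sqrt (q x))^2" for x
  have hm[measurable]: "h \<in> borel_measurable \<nu>" unfolding h_def by measurable
  have hle: "h x \<le> p x + q x" for x
  proof -
    have "h x = p x + q x - 2 * sqrt (p x) * sqrt (q x)" unfolding h_def using p0[of x]
      by (simp add: power2_diff)
    also have "\<dots> \<le> p x + q x" using p0[of x] by simp
    finally show ?thesis .
  qed
  have h0: "h x \<ge> 0" for x unfolding h_def by simp
  have ih: "integrable \<nu> h"
    by (rule Bochner_Integration.integrable_bound[of _ "\<lambda>x. p x + q x"]) (use ip1 iq1 hle h0 p0 in auto)
  have H: "hellinger_sq P Q = (\<integral>x. h x \<partial>\<nu>)"
  proof -
    have "hellinger_sq P Q = enn2real (\<integral>\<^sup>+ x. ennreal (h x) \<partial>\<nu>)"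
      unfolding hellinger_sq_def Let_def \<nu>_def[symmetric] h_def p_def q_def ..
    also have "\<dots> = enn2real (ennreal (\<integral>x. h x \<partial>\<nu>))"
      by (subst nn_integral_eq_integral) (use ih h0 in auto)
    also have "\<dots> = (\<integral>x. h x \<partial>\<nu>)" using h0 by (simp add: integral_nonneg)
    finally show ?thesis .
  qed
  have "(\<integral>x. r x \<partial>Q) - (\<integral>x. r x \<partial>P) = (\<integral>x. q x * r x - p x * r x - (q x / 2 - p x / 2) \<partial>\<nu>)"
    using ipP ipQ ip1 iq1 by simp
  also have "\<dots> = (\<integral>x. (r x - 1/2) * (q x - p x) \<partial>\<nu>)"
    by (rule Bochner_Integration.integral_cong) (auto simp: field_simps)
  also have "\<dots> \<le> (\<integral>x. g/2 * h x + (p x + q x) / (4*g) \<partial>\<nu>)"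
  proof (rule integral_mono)
    show "integrable \<nu> (\<lambda>x. (r x - 1/2) * (q x - p x))"
      using ipP ipQ ip1 iq1 by (simp add: algebra_simps)
    show "integrable \<nu> (\<lambda>x. g/2 * h x + (p x + q x) / (4*g))"
      using ih ip1 iq1 by simp
    fix x assume "x \<in> space \<nu>"
    then show "(r x - 1/2) * (q x - p x) \<le> g/2 * h x + (p x + q x) / (4*g)"
      unfolding h_def using pw[OF p0(1)[of x] p0(2)[of x] _ _ g, of "r x"] rb sp\<nu> by auto
  qed
  also have "\<dots> = g/2 * hellinger_sq P Q + 1/(2*g)"
    using ih ip1 iq1 H by (simp add: field_simps)
  finally show ?thesis .
qed

lemma fst_meas: "fst \<in> borel_measurable (RO Obs)"
proof -
  have "fst \<in> RO Obs \<rightarrow>\<^sub>M restrict_space borel {0..1::real}" unfolding RO_def by (rule measurable_fst)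
  moreover have "(\<lambda>x::real. x) \<in> restrict_space borel {0..1::real} \<rightarrow>\<^sub>M borel"
    by (intro measurable_restrict_space1) simp
  ultimately show ?thesis using measurable_comp by (metis fun.map_ident)
qed

lemma model_facts:
  assumes "M \<in> models Obs"
  shows "prob_space (M \<pi>)" "sets (M \<pi>) = sets (RO Obs)" "fst \<in> borel_measurable (M \<pi>)"
    "\<And>x. x \<in> space (M \<pi>) \<Longrightarrow> 0 \<le> fst x \<and> fst x \<le> 1"
proof -
  show pr: "prob_space (M \<pi>)" and s: "sets (M \<pi>) = sets (RO Obs)" using assms by (auto simp: models_def)
  show "fst \<in> borel_measurable (M \<pi>)" using fst_meas measurable_cong_sets[OF s refl] by metis
  have "space (M \<pi>) = space (RO Obs)" using s by (rule sets_eq_imp_space_eq)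
  also have "\<dots> = {0..1} \<times> space Obs" unfolding RO_def by (simp add: space_pair_measure)
  finally show "\<And>x. x \<in> space (M \<pi>) \<Longrightarrow> 0 \<le> fst x \<and> fst x \<le> 1" by auto
qed

lemma fval_bnd:
  assumes "M \<in> models Obs"
  shows "0 \<le> fval M \<pi> \<and> fval M \<pi> \<le> 1"
proof -
  note F = model_facts[OF assms, where \<pi>=\<pi>]
  interpret prob_space "M \<pi>" by (rule F(1))
  have i: "integrable (M \<pi>) fst"
    by (rule integrable_const_bound[of _ 1]) (use F in auto)
  have "0 \<le> fval M \<pi>" unfolding fval_def by (rule Bochner_Integration.integral_nonneg) (use F in auto)
  moreover have "fval M \<pi> \<le> (\<integral>x. 1 \<partial>M \<pi>)" unfolding fval_def
    by (rule integral_mono) (use F i in auto)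
  ultimately show ?thesis by (simp add: prob_space)
qed

lemma fstar_bnd:
  assumes "M \<in> models Obs"
  shows "fval M \<pi> \<le> fstar M" "fstar M \<le> 1"
proof -
  have b: "bdd_above (range (fval M))" using fval_bnd[OF assms] by (auto intro: bdd_aboveI[of _ 1])
  show "fval M \<pi> \<le> fstar M" unfolding fstar_def by (rule cSUP_upper[OF _ b]) simp
  show "fstar M \<le> 1" unfolding fstar_def by (rule cSUP_least) (use fval_bnd[OF assms] in auto)
qed

lemma gap_bnd:
  assumes "M \<in> models Obs"
  shows "0 \<le> gap M \<pi> \<and> gap M \<pi> \<le> 1"
  using fstar_bnd(1)[OF assms, where \<pi>=\<pi>] fstar_bnd(2)[OF assms] fval_bnd[OF assms, where \<pi>=\<pi>] unfolding gap_def by auto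

lemma Ep_gap:
  assumes "M \<in> models Obs"
  shows "integrable (measure_pmf p) (gap M)" "0 \<le> Ep p (gap M)" "Ep p (gap M) \<le> 1"
proof -
  show i: "integrable (measure_pmf p) (gap M)"
    by (rule measure_pmf.integrable_const_bound[where B=1]) (use gap_bnd[OF assms] in auto)
  show "0 \<le> Ep p (gap M)" unfolding Ep_def
    by (rule Bochner_Integration.integral_nonneg) (use gap_bnd[OF assms] in auto)
  show "Ep p (gap M) \<le> 1" unfolding Ep_def
    by (rule measure_pmf.integral_le_const[OF i]) (use gap_bnd[OF assms] in auto)
qed

lemma fdiff:
  assumes "M \<in> models Obs" "Mbar \<in> models Obs" "g > 0"
  shows "fval Mbar \<pi> - fval M \<pi> \<le> g/2 * hellinger_sq (M \<pi>) (Mbar \<pi>) + 1/(2*g)"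
proof -
  note F = model_facts[OF assms(1), where \<pi>=\<pi>] and G = model_facts[OF assms(2), where \<pi>=\<pi>]
  show ?thesis unfolding fval_def
    by (rule hell_bound[OF F(1) G(1) _ F(3) F(4) assms(3)]) (use F G in auto)
qed

lemma hell_self: "hellinger_sq P P = 0"
  by (simp add: hellinger_sq_def)

lemma hell_nonneg: "hellinger_sq P Q \<ge> 0"
  by (simp add: hellinger_sq_def Let_def)


lemma key:
  assumes Mc: "Mc \<subseteq> models Obs" and Mb: "Mbar \<in> models Obs" and a: "\<alpha> > 0" and g: "\<gamma> > 0"
    and M: "M \<in> models Obs" "M \<in> Mc \<union> {Mbar}" "fstar M \<le> fstar Mbar + \<alpha>"
    and S: "S = {Ep p (gap M) | M. M \<in> Mc \<union> {Mbar} \<and>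
                        Ep p (\<lambda>\<pi>. hellinger_sq (M \<pi>) (Mbar \<pi>)) \<le> \<epsilon>\<^sup>2}"
  shows "S \<noteq> {}" "bdd_above S" "0 \<le> Sup S"
    "Ep p (\<lambda>\<pi>. gap M \<pi> - \<gamma> * hellinger_sq (M \<pi>) (Mbar \<pi>))
       \<le> Sup S + max 0 (\<alpha> + 1 / (2 * \<gamma>) - \<gamma> * \<epsilon>\<^sup>2 / 2)"
proof -
  have inS: "Ep p (gap Mbar) \<in> S" unfolding S by (auto simp: hell_self Ep_def)
  then show ne: "S \<noteq> {}" by auto
  show bdd: "bdd_above S"
    unfolding S by (rule bdd_aboveI[of _ 1]) (use Mc Mb Ep_gap in blast)
  have V0: "Ep p (gap Mbar) \<le> Sup S" by (rule cSup_upper[OF inS bdd])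
  then show V: "0 \<le> Sup S" using Ep_gap(2)[OF Mb, of p] by linarith
  define h where "h \<pi> = hellinger_sq (M \<pi>) (Mbar \<pi>)" for \<pi>
  have h0: "h \<pi> \<ge> 0" for \<pi> unfolding h_def by (rule hell_nonneg)
  let ?c = "max 0 (\<alpha> + 1 / (2 * \<gamma>) - \<gamma> * \<epsilon>\<^sup>2 / 2)"
  have main: "Ep p (\<lambda>\<pi>. gap M \<pi> - \<gamma> * h \<pi>) \<le> Sup S + ?c"
  proof (cases "integrable (measure_pmf p) (\<lambda>\<pi>. gap M \<pi> - \<gamma> * h \<pi>)")
    case False
    then show ?thesis using V unfolding Ep_def by (simp add: not_integrable_integral_eq)
  next
    case True
    have ig: "integrable (measure_pmf p) (gap M)" by (rule Ep_gap(1)[OF M(1)])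
    have "integrable (measure_pmf p) (\<lambda>\<pi>. gap M \<pi> - (gap M \<pi> - \<gamma> * h \<pi>))"
      by (rule Bochner_Integration.integrable_diff[OF ig True])
    then have ih: "integrable (measure_pmf p) h" using g by simp
    have Eq: "Ep p (\<lambda>\<pi>. gap M \<pi> - \<gamma> * h \<pi>) = Ep p (gap M) - \<gamma> * Ep p h"
      unfolding Ep_def using ig ih by simp
    have Eh0: "Ep p h \<ge> 0" unfolding Ep_def by (rule Bochner_Integration.integral_nonneg) (use h0 in auto)
    show ?thesis
    proof (cases "Ep p h \<le> \<epsilon>\<^sup>2")
      case True
      then have "Ep p (gap M) \<in> S" unfolding S h_def using M(2) by blast
      then have "Ep p (gap M) \<le> Sup S" by (rule cSup_upper[OF _ bdd])
      then show ?thesis unfolding Eq using Eh0 g by (smt (verit) mult_nonneg_nonneg max.cobounded1)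
    next
      case False
      have pw: "gap M \<pi> - \<gamma> * h \<pi> \<le> gap Mbar \<pi> + \<alpha> + 1/(2*\<gamma>) - \<gamma>/2 * h \<pi>" for \<pi>
        using fdiff[OF M(1) Mb g, of \<pi>] M(3) unfolding gap_def h_def by (simp add: field_simps)
      have igb: "integrable (measure_pmf p) (gap Mbar)" by (rule Ep_gap(1)[OF Mb])
      have "Ep p (\<lambda>\<pi>. gap M \<pi> - \<gamma> * h \<pi>) \<le> Ep p (\<lambda>\<pi>. gap Mbar \<pi> + \<alpha> + 1/(2*\<gamma>) - \<gamma>/2 * h \<pi>)"
        unfolding Ep_def by (rule integral_mono) (use True igb ih pw in auto)
      also have "\<dots> = Ep p (gap Mbar) + \<alpha> + 1/(2*\<gamma>) - \<gamma>/2 * Ep p h"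
        unfolding Ep_def using igb ih by simp
      also have "\<dots> \<le> Sup S + (\<alpha> + 1/(2*\<gamma>) - \<gamma> * \<epsilon>\<^sup>2 / 2)"
      proof -
        have "\<gamma> * \<epsilon>\<^sup>2 \<le> \<gamma> * Ep p h" using False g by (intro mult_left_mono) auto
        then show ?thesis using V0 by simp
      qed
      also have "\<dots> \<le> Sup S + ?c" by simp
      finally show ?thesis .
    qed
  qed
  then show "Ep p (\<lambda>\<pi>. gap M \<pi> - \<gamma> * hellinger_sq (M \<pi>) (Mbar \<pi>)) \<le> Sup S + ?c"
    by (simp add: h_def)
qed


theorem proposition4p7:
  fixes Obs :: "'o measure"
    and Mc :: "('p \<Rightarrow> (real \<times> 'o) measure) set"
    and Mbar :: "'p \<Rightarrow> (real \<times> 'o) measure"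
    and \<alpha> \<gamma> :: real
  assumes "Mc \<subseteq> models Obs"
    and "Mbar \<in> models Obs"
    and "\<alpha> > 0" and "\<gamma> > 0"
  shows "(\<forall>\<epsilon>>0. dec_o (localized Mc Mbar \<alpha> \<union> {Mbar}) Mbar \<gamma>
            \<le> dec_c (Mc \<union> {Mbar}) Mbar \<epsilon> + max 0 (\<alpha> + 1 / (2 * \<gamma>) - \<gamma> * \<epsilon>\<^sup>2 / 2))
       \<and> dec_o (localized Mc Mbar \<alpha> \<union> {Mbar}) Mbar \<gamma>
            \<le> dec_c (Mc \<union> {Mbar}) Mbar (sqrt (2 * \<alpha> / \<gamma>)) + 1 / (2 * \<gamma>)"
proof -
  note A = assms
  have first: "dec_o (localized Mc Mbar \<alpha> \<union> {Mbar}) Mbar \<gamma>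
            \<le> dec_c (Mc \<union> {Mbar}) Mbar \<epsilon> + max 0 (\<alpha> + 1 / (2 * \<gamma>) - \<gamma> * \<epsilon>\<^sup>2 / 2)"
    if e: "\<epsilon> > 0" for \<epsilon>
  proof -
    let ?c = "max 0 (\<alpha> + 1 / (2 * \<gamma>) - \<gamma> * \<epsilon>\<^sup>2 / 2)"
    define C where "C = localized Mc Mbar \<alpha> \<union> {Mbar}"
    define S where "S p = {Ep p (gap M) | M. M \<in> Mc \<union> {Mbar} \<and>
                        Ep p (\<lambda>\<pi>. hellinger_sq (M \<pi>) (Mbar \<pi>)) \<le> \<epsilon>\<^sup>2}" for p
    define Ob where "Ob p M = Ep p (\<lambda>\<pi>. gap M \<pi> - \<gamma> * hellinger_sq (M \<pi>) (Mbar \<pi>))" for p M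
    have CM: "M \<in> models Obs" "M \<in> Mc \<union> {Mbar}" "fstar M \<le> fstar Mbar + \<alpha>" if "M \<in> C" for M
      using that A unfolding C_def localized_def by auto
    have K: "S p \<noteq> {}" "0 \<le> Sup (S p)" "Ob p M \<le> Sup (S p) + ?c" if "M \<in> C" for p M
      using key[OF A CM[OF that], of "S p" p \<epsilon>] unfolding S_def Ob_def by auto
    have MbC: "Mbar \<in> C" unfolding C_def by simp
    have dc: "dec_c (Mc \<union> {Mbar}) Mbar \<epsilon> = (INF p. Sup (S p))"
      unfolding dec_c_def Let_def S_def[symmetric] using K(1)[OF MbC] by simp
    have dov: "dec_o (localized Mc Mbar \<alpha> \<union> {Mbar}) Mbar \<gamma> = (INF p. SUP M\<in>C. Ob p M)"
      unfolding dec_o_def C_def Ob_def ..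
    have Ole: "(SUP M\<in>C. Ob p M) \<le> Sup (S p) + ?c" for p
      by (rule cSUP_least) (use MbC K in auto)
    have Oge: "0 \<le> (SUP M\<in>C. Ob p M)" for p
    proof -
      have "Ob p Mbar = Ep p (gap Mbar)" unfolding Ob_def by (simp add: hell_self)
      then have "0 \<le> Ob p Mbar" using Ep_gap(2)[OF A(2)] by simp
      also have "Ob p Mbar \<le> (SUP M\<in>C. Ob p M)"
        by (rule cSUP_upper[OF MbC]) (rule bdd_aboveI[of _ "Sup (S p) + ?c"], use K in auto)
      finally show ?thesis .
    qed
    have "(INF p. SUP M\<in>C. Ob p M) - ?c \<le> (INF p. Sup (S p))"
    proof (rule cINF_greatest)
      fix p
      have "(INF p. SUP M\<in>C. Ob p M) \<le> (SUP M\<in>C. Ob p M)"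
        by (rule cINF_lower) (rule bdd_belowI[of _ 0], use Oge in auto)
      then show "(INF p. SUP M\<in>C. Ob p M) - ?c \<le> Sup (S p)" using Ole[of p] by simp
    qed simp
    then show ?thesis unfolding dc dov by simp
  qed
  have "2 * \<alpha> / \<gamma> > 0" using A by simp
  then have sp: "sqrt (2 * \<alpha> / \<gamma>) > 0" by simp
  have "\<gamma> * (sqrt (2 * \<alpha> / \<gamma>))\<^sup>2 / 2 = \<alpha>" using A by simp
  then have "max 0 (\<alpha> + 1 / (2 * \<gamma>) - \<gamma> * (sqrt (2 * \<alpha> / \<gamma>))\<^sup>2 / 2) = 1 / (2 * \<gamma>)"
    using A by simp
  then show ?thesis using first first[OF sp] by simp
qed

end
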